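(* There is no trajectory $(x,y,z)(\eta_1)$ of system (S2) such that, for some $\eta_{1,*}\in\mathbb{R}$, $x(\eta_1)>0$, $z(\eta_1)>0$, $y(\eta_1)<0$ for all $\eta_1>\eta_{1,*}$, and $$z(\eta_1)\to\infty,\qquad \frac{z(\eta_1)}{x(\eta_1)}\to\infty,\qquad \frac{y(\eta_1)}{z(\eta_1)}\to0,\qquad \eta_1\to\infty$$ (i.e. no trajectory enters the critical point at infinity $Q_4$ from the region $\{x>0,z>0,y<0\}$).
   Context: Let $N\geq1$, $m>1$, $\sigma>0$, $p>m$, $L=\sigma(m-1)+2(p-1)$, $\alpha=(\sigma+2)/L$, $\beta=(p-m)/L$. Positive profiles $f$ solve $(f^m)''+\frac{N-1}{\xi}(f^m)'+\alpha f+\beta\xi f'-\xi^\sigma f^p=0$. Setting $x=\frac{\alpha}{m}\xi^2f^{1-m}$, $y=\xi f'/f$, $z=\frac1m\xi^{\sigma+2}f^{p-m}$, $\eta_1=\ln\xi$, $(x,y,z)$ solves the autonomous system (S2): $$\dot x=x(2-(m-1)y),\quad \dot y=-x-(N-2)y+z-my^2-\tfrac{p-m}{\sigma+2}xy,\quad \dot z=z(\sigma+2+(p-m)y).$$ *)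

theory Defs
  imports "HOL-Analysis.Analysis"
begin

definition S2_at :: "real \<Rightarrow> real \<Rightarrow> real \<Rightarrow> real \<Rightarrow> (real \<Rightarrow> real) \<Rightarrow> (real \<Rightarrow> real) \<Rightarrow> (real \<Rightarrow> real) \<Rightarrow> real \<Rightarrow> bool" where
  "S2_at N m \<sigma> p x y z t \<longleftrightarrow>
     (x has_real_derivative x t * (2 - (m - 1) * y t)) (at t) \<and>
     (y has_real_derivative
        (- x t - (N - 2) * y t + z t - m * (y t)\<^sup>2 - (p - m) / (\<sigma> + 2) * x t * y t)) (at t) \<and>
     (z has_real_derivative z t * (\<sigma> + 2 + (p - m) * y t)) (at t)"

end

theory Submission
  imports Defs
begin

lemma keyineq:
  fixes N :: nat and m c K X Y Z :: real
  assumes "N \<ge> 1" "m > 0" "c > 0" "K > 0" "X > 0" "Y < 0" "-K \<le> Y"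
    "Z \<ge> 2 * (1 + K + m * K^2)" "Z / X \<ge> 2"
  shows "- X - (real N - 2) * Y + Z - m * Y\<^sup>2 - c * X * Y \<ge> 1"
proof -
  have zx: "Z \<ge> 2 * X" using assms(5,9) by (simp add: field_simps)
  have a: "- (real N - 2) * Y \<ge> -K"
  proof (cases "N \<ge> 2")
    case True
    then have "real N - 2 \<ge> 0" by simp
    then have "(real N - 2) * Y \<le> 0" using assms(6) by (simp add: mult_nonneg_nonpos)
    then show ?thesis using assms(4) by linarith
  next
    case False
    then have "N = 1" using assms(1) by simp
    then show ?thesis using assms(7) by simp
  qed
  have "(-Y)^2 \<le> K^2" using assms(6,7) by (intro power_mono) auto
  then have "Y^2 \<le> K^2" by simp
  then have b: "m * Y^2 \<le> m * K^2" using assms(2) by simp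
  have "c * X * Y \<le> 0" using mult_pos_neg[of "c*X" Y] assms(3,5,6) by simp
  then show ?thesis using a b zx assms(8) by argo
qed

lemma first_hit:
  fixes f :: "real \<Rightarrow> real"
  assumes "continuous_on {a..b} f" "f a > c" "u0 \<in> {a..b}" "f u0 \<le> c"
  shows "\<exists>u\<in>{a..b}. f u \<le> c \<and> (\<forall>v\<in>{a..b}. v < u \<longrightarrow> f v > c)"
proof -
  let ?S = "{a..b} \<inter> f -` {..c}"
  have "closed ?S" by (rule continuous_closed_preimage[OF assms(1)]) auto
  then have "compact ?S" unfolding compact_eq_bounded_closed
    by (meson bounded_subset bounded_closed_interval inf.cobounded1)
  moreover have "?S \<noteq> {}" using assms(3,4) by auto
  ultimately obtain u where u: "u \<in> ?S" "\<forall>t\<in>?S. u \<le> t" using compact_attains_inf by blast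
  show ?thesis
  proof (intro bexI[of _ u] conjI ballI impI)
    fix v assume "v \<in> {a..b}" "v < u"
    then show "f v > c" using u(2) by (meson IntI linorder_not_le not_le vimageI atMost_iff)
  qed (use u in auto)
qed

theorem lemma2p8:
  fixes N :: nat and m \<sigma> p :: real
  assumes "N \<ge> 1" and "m > 1" and "\<sigma> > 0" and "p > m"
  shows "\<not> (\<exists>(x::real\<Rightarrow>real) (y::real\<Rightarrow>real) (z::real\<Rightarrow>real) (t0::real).
            (\<forall>t>t0. S2_at (real N) m \<sigma> p x y z t) \<and>
            (\<forall>t>t0. x t > 0 \<and> z t > 0 \<and> y t < 0) \<and>
            filterlim z at_top at_top \<and>
            filterlim (\<lambda>t. z t / x t) at_top at_top \<and>
            ((\<lambda>t. y t / z t) \<longlongrightarrow> 0) at_top)"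
proof
  assume "\<exists>(x::real\<Rightarrow>real) (y::real\<Rightarrow>real) (z::real\<Rightarrow>real) (t0::real).
            (\<forall>t>t0. S2_at (real N) m \<sigma> p x y z t) \<and>
            (\<forall>t>t0. x t > 0 \<and> z t > 0 \<and> y t < 0) \<and>
            filterlim z at_top at_top \<and>
            filterlim (\<lambda>t. z t / x t) at_top at_top \<and>
            ((\<lambda>t. y t / z t) \<longlongrightarrow> 0) at_top"
  then obtain x y z :: "real \<Rightarrow> real" and t0 where
    S: "\<forall>t>t0. S2_at (real N) m \<sigma> p x y z t" and
    R: "\<forall>t>t0. x t > 0 \<and> z t > 0 \<and> y t < 0" and
    zl: "filterlim z at_top at_top" and zxl: "filterlim (\<lambda>t. z t / x t) at_top at_top"
    by blast
  define c where "c = (p - m) / (\<sigma> + 2)"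
  define K where "K = (\<sigma> + 2) / (p - m)"
  define B where "B = 1 + K + m * K^2"
  define Dy where "Dy = (\<lambda>t. - x t - (real N - 2) * y t + z t - m * (y t)\<^sup>2 - (p - m) / (\<sigma> + 2) * x t * y t)"
  have cpos: "c > 0" and Kpos: "K > 0" using assms unfolding c_def K_def by auto
  have dy: "\<And>t. t > t0 \<Longrightarrow> (y has_real_derivative Dy t) (at t)"
    using S unfolding S2_at_def Dy_def by blast
  have dz: "\<And>t. t > t0 \<Longrightarrow> (z has_real_derivative z t * (\<sigma> + 2 + (p - m) * y t)) (at t)"
    using S unfolding S2_at_def by blast
  have ev: "eventually (\<lambda>t. t > t0 \<and> z t \<ge> 2 * B \<and> z t / x t \<ge> 2) at_top"
    using eventually_gt_at_top[of t0] filterlim_at_top[THEN iffD1, OF zl, rule_format, of "2*B"]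
      filterlim_at_top[THEN iffD1, OF zxl, rule_format, of 2]
    by eventually_elim auto
  then obtain T1 where T1: "\<And>t. t \<ge> T1 \<Longrightarrow> t > t0 \<and> z t \<ge> 2 * B \<and> z t / x t \<ge> 2"
    unfolding eventually_at_top_linorder by blast
  have gt: "\<And>t. t \<ge> T1 \<Longrightarrow> t > t0" using T1 by blast
  have Dpos: "Dy t \<ge> 1" if "t \<ge> T1" "y t \<ge> -K" for t
  proof -
    have "t > t0" using T1 that(1) by blast
    then have r: "x t > 0" "y t < 0" using R by auto
    have "- x t - (real N - 2) * y t + z t - m * (y t)\<^sup>2 - c * x t * y t \<ge> 1"
    proof (rule keyineq)
      show "z t \<ge> 2 * (1 + K + m * K^2)" using T1[OF that(1)] unfolding B_def by blast
      show "z t / x t \<ge> 2" using T1[OF that(1)] by blast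
    qed (use assms cpos Kpos r that in simp_all)
    then show ?thesis unfolding Dy_def c_def .
  qed
  have "\<exists>t1\<ge>T1. y t1 > -K"
  proof (rule ccontr)
    assume "\<not> ?thesis"
    then have yle: "\<And>t. t \<ge> T1 \<Longrightarrow> y t \<le> -K" by (meson not_le)
    have zle: "z t \<le> z T1" if "t \<ge> T1" for t
    proof (cases "t = T1")
      case False
      then have lt: "T1 < t" using that by simp
      have "\<And>s. T1 \<le> s \<Longrightarrow> s \<le> t \<Longrightarrow> (z has_real_derivative z s * (\<sigma> + 2 + (p - m) * y s)) (at s)"
        by (rule dz, rule gt) simp
      from MVT2[OF lt this] obtain \<xi> where xi: "\<xi> > T1" "\<xi> < t"
        "z t - z T1 = (t - T1) * (z \<xi> * (\<sigma> + 2 + (p - m) * y \<xi>))" by blast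
      have "y \<xi> \<le> -K" using yle xi(1) by simp
      then have "(p - m) * y \<xi> \<le> (p - m) * (-K)" by (rule mult_left_mono) (use \<open>y \<xi> \<le> -K\<close> assms(4) in linarith)+
      also have "(p - m) * (-K) = -(\<sigma>+2)" unfolding K_def using assms by simp
      finally have "\<sigma> + 2 + (p - m) * y \<xi> \<le> 0" by simp
      moreover have "z \<xi> > 0" using R gt[of \<xi>] xi(1) by simp
      ultimately have "z \<xi> * (\<sigma> + 2 + (p - m) * y \<xi>) \<le> 0" by (meson less_imp_le mult_nonneg_nonpos)
      then have "(t - T1) * (z \<xi> * (\<sigma> + 2 + (p - m) * y \<xi>)) \<le> 0" using lt
        by (meson diff_ge_0_iff_ge less_imp_le mult_nonneg_nonpos)
      then show ?thesis using xi(3) by linarith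
    qed simp
    have "eventually (\<lambda>t. z t > z T1 \<and> t \<ge> T1) at_top"
      using filterlim_at_top_dense[THEN iffD1, OF zl, rule_format, of "z T1"] eventually_ge_at_top[of T1]
      by eventually_elim simp
    then obtain t where "z t > z T1" "t \<ge> T1" using eventually_happens'[OF trivial_limit_at_top_linorder] by blast
    then show False using zle by (meson not_le)
  qed
  then obtain t1 where t1: "t1 \<ge> T1" "y t1 > -K" by blast
  define s where "s = t1 + K + 1"
  have ts: "t1 < s" using Kpos s_def by simp
  have cont: "continuous_on {t1..s} y"
  proof (intro continuous_at_imp_continuous_on ballI)
    fix v assume "v \<in> {t1..s}"
    then have "v > t0" using gt t1(1) by simp
    then show "isCont y v" using dy DERIV_isCont by blast
  qed
  have above: "\<forall>u\<in>{t1..s}. y u > -K"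
  proof (rule ccontr)
    assume "\<not> ?thesis"
    then obtain u0 where "u0 \<in> {t1..s}" "y u0 \<le> -K" by (meson not_le)
    from first_hit[OF cont t1(2) this] obtain u where
      u: "u \<in> {t1..s}" "y u \<le> -K" "\<forall>v\<in>{t1..s}. v < u \<longrightarrow> y v > -K" by blast
    have ut: "t1 < u" using u t1 by (cases "u = t1") auto
    have "\<And>v. t1 \<le> v \<Longrightarrow> v \<le> u \<Longrightarrow> (y has_real_derivative Dy v) (at v)"
      by (rule dy, rule gt) (use t1(1) in linarith)
    from MVT2[OF ut this] obtain \<xi> where xi: "\<xi> > t1" "\<xi> < u" "y u - y t1 = (u - t1) * Dy \<xi>" by blast
    have "\<xi> \<in> {t1..s}" using xi u(1) by simp
    then have "y \<xi> > -K" using u(3) xi(2) by blast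
    then have "Dy \<xi> \<ge> 1" using Dpos[of \<xi>] xi(1) t1(1) by simp
    then have "(u - t1) * Dy \<xi> > 0" using ut by simp
    then show False using xi u t1 by linarith
  qed
  have "\<And>v. t1 \<le> v \<Longrightarrow> v \<le> s \<Longrightarrow> (y has_real_derivative Dy v) (at v)"
    by (rule dy, rule gt) (use t1(1) in linarith)
  from MVT2[OF ts this] obtain \<xi> where xi: "\<xi> > t1" "\<xi> < s" "y s - y t1 = (s - t1) * Dy \<xi>" by blast
  have "\<xi> \<in> {t1..s}" using xi by simp
  then have "y \<xi> > -K" using above by blast
  then have "Dy \<xi> \<ge> 1" using Dpos[of \<xi>] xi(1) t1(1) by simp
  then have "(s - t1) * Dy \<xi> \<ge> (s - t1) * 1" using ts by (intro mult_left_mono) simp_all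
  then have "(s - t1) * Dy \<xi> \<ge> s - t1" by (simp only: mult_1_right)
  moreover have "s - t1 = K + 1" using s_def by simp
  ultimately have "y s \<ge> y t1 + K + 1" using xi(3) by linarith
  then have "y s > 0" using t1 by simp
  moreover have "y s < 0" using R gt[of s] ts t1(1) by simp
  ultimately show False by simp
qed

end
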